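(* Let $d\ge 1$, $n_1,n_2\in\mathbb{N}$, and for $i=1,\dots,n_1$ let $\alpha_i\in\mathbb{N}$ and $\kappa_i^2>0$; for $j=1,\dots,n_2$ let $b_j\in\mathbb{R}$ and $\mathbf{B}_j\in\mathbb{R}^d$. Let $X(\mathbf{s})$, $\mathbf{s}\in\mathbb{R}^d$, be the stationary Gaussian random field solving $$\Biggl(\prod_{i=1}^{n_1}(\kappa_i^2-\Delta)^{\alpha_i/2}\Biggr)X(\mathbf{s})=\Biggl(\prod_{j=1}^{n_2}(b_j+\mathbf{B}_j^{\top}\nabla)\Biggr)\mathcal{W}(\mathbf{s}),$$ where $\mathcal{W}$ is Gaussian white noise on $\mathbb{R}^d$. If $2\sum_{i=1}^{n_1}\alpha_i-2n_2>d$, then $X$ has almost surely continuous sample functions (i.e. admits a modification with almost surely continuous sample paths).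
   Context: $\Delta$ denotes the Laplacian and $\nabla$ the gradient on $\mathbb{R}^d$; the fractional operator $(\kappa^2-\Delta)^{\alpha/2}$ acts in the spectral domain as multiplication by $(\kappa^2+\|\mathbf{k}\|^2)^{\alpha/2}$, so that $X$ is the stationary Gaussian field with spectral density proportional to $\prod_{j=1}^{n_2}(b_j^2+\mathbf{k}^{\top}\mathbf{B}_j\mathbf{B}_j^{\top}\mathbf{k})\big/\prod_{j=1}^{n_1}(\kappa_j^2+\|\mathbf{k}\|^2)^{\alpha_j}$. *)

theory Defs
  imports "HOL-Probability.Probability"
begin

definition gaussian_rv :: "'a measure \<Rightarrow> ('a \<Rightarrow> real) \<Rightarrow> bool" where
  "gaussian_rv M Y \<longleftrightarrow> Y \<in> borel_measurable M \<and>
     (\<exists>mu sigma. (sigma > 0 \<and> distributed M lborel Y (\<lambda>x. ennreal (normal_density mu sigma x)))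
               \<or> distr M borel Y = return borel mu)"

definition gaussian_field :: "'a measure \<Rightarrow> ('i \<Rightarrow> 'a \<Rightarrow> real) \<Rightarrow> bool" where
  "gaussian_field M X \<longleftrightarrow>
     (\<forall>S c. finite S \<longrightarrow> gaussian_rv M (\<lambda>\<omega>. \<Sum>s\<in>S. c s * X s \<omega>))"

text \<open>The (unnormalised) spectral density of the field in the paper:
  prod_j (b_j^2 + k^T B_j B_j^T k) / prod_i (kappa_i^2 + |k|^2)^alpha_i.\<close>
definition spec_dens ::
  "nat \<Rightarrow> (nat \<Rightarrow> nat) \<Rightarrow> (nat \<Rightarrow> real) \<Rightarrow> nat \<Rightarrow> (nat \<Rightarrow> real) \<Rightarrow> (nat \<Rightarrow> real^'d)
    \<Rightarrow> real^'d \<Rightarrow> real" where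
  "spec_dens n1 \<alpha> \<kappa> n2 b B k =
     (\<Prod>j<n2. (b j)\<^sup>2 + (B j \<bullet> k)\<^sup>2) / (\<Prod>i<n1. ((\<kappa> i)\<^sup>2 + (norm k)\<^sup>2) ^ \<alpha> i)"

definition stationary_gaussian_with_spectral_density ::
  "'a measure \<Rightarrow> (real^'d \<Rightarrow> 'a \<Rightarrow> real) \<Rightarrow> (real^'d \<Rightarrow> real) \<Rightarrow> bool" where
  "stationary_gaussian_with_spectral_density M X f \<longleftrightarrow>
     gaussian_field M X \<and>
     (\<exists>c>0. \<forall>s t. integrable M (\<lambda>\<omega>. X s \<omega> * X t \<omega>) \<and>
        (\<integral>\<omega>. X s \<omega> \<partial>M) = 0 \<and>
        (\<integral>\<omega>. X s \<omega> * X t \<omega> \<partial>M) = c * (\<integral>k. cos (k \<bullet> (s - t)) * f k \<partial>lborel))"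

end

theory Submission
  imports Defs
begin

lemma ennreal_le_add3:
  fixes u a b c :: ennreal
  shows "u \<le> a \<Longrightarrow> u \<le> a + b + c" "u \<le> b \<Longrightarrow> u \<le> a + b + c" "u \<le> c \<Longrightarrow> u \<le> a + b + c"
  by (auto intro: order_trans[OF _ add_increasing2[of _ _ "_::ennreal"]] order_trans[OF _ add_increasing[of _ _ "_::ennreal"]]
    simp: add.assoc add_increasing add_increasing2)

lemma sq_powr_abs: "x \<noteq> 0 \<Longrightarrow> ((x::real)\<^sup>2) powr (-a) = \<bar>x\<bar> powr (-2*a)"
proof -
  assume x: "x \<noteq> 0"
  have e1: "(x\<^sup>2) = \<bar>x\<bar> powr 2" using x by (simp add: powr_realpow)
  have "(x\<^sup>2) powr (-a) = (\<bar>x\<bar> powr 2) powr (-a)" by (simp only: e1)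
  also have "\<dots> = \<bar>x\<bar> powr (2 * (-a))" by (rule powr_powr)
  also have "\<dots> = \<bar>x\<bar> powr (-2*a)" by simp
  finally show ?thesis .
qed

lemma nn_powr_tail_finite:
  fixes e :: real assumes e: "e < -1"
  shows "(\<integral>\<^sup>+x. ennreal (indicator {1..} x * x powr e) \<partial>lborel) < \<infinity>"
proof -
  have h: "((\<lambda>x. x powr e) has_integral -(1 powr (e+1)) / (e+1)) {1..}"
    by (rule has_integral_powr_to_inf[OF e]) simp
  have eq: "(\<lambda>x. indicator {1..} x * x powr e) = (\<lambda>x. if x \<in> {1..} then x powr e else 0)"
    by (auto simp: indicator_def)
  have "((\<lambda>x. indicator {1..} x * x powr e) has_integral -(1 powr (e+1)) / (e+1)) UNIV"
    unfolding eq has_integral_restrict_UNIV by (rule h)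
  hence "integral\<^sup>N lborel (\<lambda>x. indicator {1..} x * x powr e) = -(1 powr (e+1)) / (e+1)"
    by (intro nn_integral_has_integral_lborel) auto
  thus ?thesis by simp
qed

lemma nn_powr_tail_finite':
  fixes e :: real assumes e: "e < -1"
  shows "(\<integral>\<^sup>+x. ennreal (indicator {..-1} x * (-x) powr e) \<partial>lborel) < \<infinity>"
proof -
  have "(\<integral>\<^sup>+x. ennreal (indicator {..-1} x * (-x) powr e) \<partial>lborel)
      = (\<integral>\<^sup>+x. ennreal (indicator {1..} (-x) * (-x) powr e) \<partial>lborel)"
    by (intro nn_integral_cong) (auto simp: indicator_def)
  also have "\<dots> = (\<integral>\<^sup>+x. ennreal (indicator {1..} x * x powr e) \<partial>distr lborel borel uminus)"
    by (subst nn_integral_distr) auto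
  also have "\<dots> = (\<integral>\<^sup>+x. ennreal (indicator {1..} x * x powr e) \<partial>lborel)"
    by (simp add: lborel_distr_uminus)
  finally show ?thesis using nn_powr_tail_finite[OF e] by simp
qed

lemma oneD_finite:
  fixes a :: real assumes a: "a > 1/2"
  shows "(\<integral>\<^sup>+x. ennreal ((1 + x\<^sup>2) powr (-a)) \<partial>lborel) < \<infinity>"
proof -
  have le: "ennreal ((1 + x\<^sup>2) powr (-a)) \<le> ennreal (indicator {-1..1} x)
      + ennreal (indicator {1..} x * x powr (-2*a)) + ennreal (indicator {..-1} x * (-x) powr (-2*a))" for x
  proof (cases "\<bar>x\<bar> \<le> 1")
    case True
    have "(1 + x\<^sup>2) powr (-a) \<le> 1"
    proof -
      have "1 \<le> (1 + x\<^sup>2) powr a" using a by (intro ge_one_powr_ge_zero) auto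
      thus ?thesis by (simp add: powr_minus inverse_le_1_iff)
    qed
    hence "ennreal ((1 + x\<^sup>2) powr (-a)) \<le> ennreal (indicator {-1..1} x)"
      using True by (intro ennreal_leI) (auto simp: indicator_def abs_le_iff)
    thus ?thesis by (rule ennreal_le_add3(1))
  next
    case False
    have "(1 + x\<^sup>2) powr (-a) \<le> (x\<^sup>2) powr (-a)"
      using False a by (intro powr_mono2') auto
    also have "(x\<^sup>2) powr (-a) = \<bar>x\<bar> powr (-2*a)"
      using False by (intro sq_powr_abs) auto
    finally have *: "(1 + x\<^sup>2) powr (-a) \<le> \<bar>x\<bar> powr (-2*a)" .
    show ?thesis
    proof (cases "x \<ge> 1")
      case True
      hence "ennreal ((1 + x\<^sup>2) powr (-a)) \<le> ennreal (indicator {1..} x * x powr (-2*a))"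
        using * by (intro ennreal_leI) (simp add: indicator_def)
      thus ?thesis by (rule ennreal_le_add3(2))
    next
      case f2: False
      hence "x \<le> -1" using False by auto
      hence "ennreal ((1 + x\<^sup>2) powr (-a)) \<le> ennreal (indicator {..-1} x * (-x) powr (-2*a))"
        using * by (intro ennreal_leI) (simp add: indicator_def)
      thus ?thesis by (rule ennreal_le_add3(3))
    qed
  qed
  have "(\<integral>\<^sup>+x. ennreal ((1 + x\<^sup>2) powr (-a)) \<partial>lborel) \<le> (\<integral>\<^sup>+x. ennreal (indicator {-1..1} (x::real))
      + ennreal (indicator {1..} x * x powr (-2*a)) + ennreal (indicator {..-1} x * (-x) powr (-2*a)) \<partial>lborel)"
    by (intro nn_integral_mono le)
  also have "\<dots> = (\<integral>\<^sup>+x. ennreal (indicator {-1..1} (x::real)) \<partial>lborel)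
      + (\<integral>\<^sup>+x. ennreal (indicator {1..} x * x powr (-2*a)) \<partial>lborel)
      + (\<integral>\<^sup>+x. ennreal (indicator {..-1} x * (-x) powr (-2*a)) \<partial>lborel)"
  proof -
    have m1: "(\<lambda>x::real. ennreal (indicator {-1..1} x)) \<in> borel_measurable lborel" by (intro measurable_compose[OF _ measurable_ennreal] borel_measurable_indicator) simp
    have m2: "(\<lambda>x::real. ennreal (indicator {1..} x * x powr (-2*a))) \<in> borel_measurable lborel" by measurable
    have m3: "(\<lambda>x::real. ennreal (indicator {..-1} x * (-x) powr (-2*a))) \<in> borel_measurable lborel" by measurable
    show ?thesis
      by (subst nn_integral_add[OF borel_measurable_add[OF m1 m2] m3], subst nn_integral_add[OF m1 m2], rule refl)
  qed
  also have "\<dots> < \<infinity>"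
  proof -
    have f1: "(\<integral>\<^sup>+x. ennreal (indicator {-1..1} (x::real)) \<partial>lborel) < \<infinity>"
      by (simp add: ennreal_indicator)
    have f2: "(\<integral>\<^sup>+x. ennreal (indicator {1..} x * x powr (-2*a)) \<partial>lborel) < \<infinity>"
      by (rule nn_powr_tail_finite) (use a in simp)
    have f3: "(\<integral>\<^sup>+x. ennreal (indicator {..-1} x * (-x) powr (-2*a)) \<partial>lborel) < \<infinity>"
      by (rule nn_powr_tail_finite') (use a in simp)
    show ?thesis using f1 f2 f3 by (simp add: ennreal_add_less_top)
  qed
  finally show ?thesis .
qed

lemma multiD_finite:
  fixes s :: real
  assumes s: "s > DIM('a::euclidean_space) / 2"
  shows "(\<integral>\<^sup>+k. ennreal ((1 + (norm (k::'a))\<^sup>2) powr (-s)) \<partial>lborel) < \<infinity>"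
proof -
  define D where "D = real DIM('a)"
  have D: "D \<ge> 1" by (simp add: D_def DIM_positive Suc_le_eq)
  define t where "t = s / D"
  have t: "t > 1/2" using s D by (simp add: t_def D_def field_simps)
  define g where "g = (\<lambda>x::real. (1 + x\<^sup>2) powr (-t))"
  have le: "(1 + (norm k)\<^sup>2) powr (-s) \<le> (\<Prod>b\<in>Basis. g (k \<bullet> b))" for k :: 'a
  proof -
    have "(1 + (norm k)\<^sup>2) powr (-s) = ((1 + (norm k)\<^sup>2) powr (-t)) ^ DIM('a)"
      by (subst powr_power) (auto simp: t_def D_def add_pos_nonneg[THEN less_imp_neq, symmetric])
    also have "\<dots> = (\<Prod>b\<in>(Basis::'a set). (1 + (norm k)\<^sup>2) powr (-t))" by simp
    also have "\<dots> \<le> (\<Prod>b\<in>Basis. g (k \<bullet> b))"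
    proof (intro prod_mono conjI)
      fix b :: 'a assume b: "b \<in> Basis"
      have "(k \<bullet> b)\<^sup>2 \<le> (norm k)\<^sup>2" using Basis_le_norm[OF b, of k]
        by (metis abs_ge_zero power2_abs power_mono)
      thus "(1 + (norm k)\<^sup>2) powr (-t) \<le> g (k \<bullet> b)" unfolding g_def
        using t by (intro powr_mono2') (auto intro: add_pos_nonneg)
    qed simp
    finally show ?thesis .
  qed
  have "(\<integral>\<^sup>+k. ennreal ((1 + (norm (k::'a))\<^sup>2) powr (-s)) \<partial>lborel)
      \<le> (\<integral>\<^sup>+k. (\<Prod>b\<in>Basis. ennreal (g ((k::'a) \<bullet> b))) \<partial>lborel)"
    by (intro nn_integral_mono) (simp add: prod_ennreal g_def ennreal_leI le[unfolded g_def])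
  also have "\<dots> = (\<Prod>b\<in>(Basis::'a set). (\<integral>\<^sup>+x. ennreal (g x) \<partial>lborel))"
    by (rule nn_integral_lborel_prod[where f="\<lambda>b x. ennreal (g x)"]) (auto simp: g_def)
  also have "\<dots> = (\<integral>\<^sup>+x. ennreal (g x) \<partial>lborel) ^ DIM('a)" by simp
  also have "\<dots> < \<infinity>"
    using oneD_finite[OF t] unfolding g_def by (simp add: power_less_top_ennreal less_top)
  finally show ?thesis .
qed

lemma spec_dens_bound:
  fixes \<kappa> b :: "nat \<Rightarrow> real" and B :: "nat \<Rightarrow> real^'d"
  assumes kap: "\<forall>i<n1. (\<kappa> i)\<^sup>2 > 0"
  shows "\<exists>C\<ge>0. \<forall>k. 0 \<le> spec_dens n1 \<alpha> \<kappa> n2 b B k \<and>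
     spec_dens n1 \<alpha> \<kappa> n2 b B k \<le> C * (1 + (norm k)\<^sup>2) powr (real n2 - real (\<Sum>i<n1. \<alpha> i))"
proof -
  define m where "m i = min ((\<kappa> i)\<^sup>2) 1" for i
  have m: "0 < m i" "m i \<le> 1" if "i < n1" for i using kap that by (auto simp: m_def)
  define c where "c j = (b j)\<^sup>2 + (norm (B j))\<^sup>2" for j
  define C where "C = (\<Prod>j<n2. c j) / (\<Prod>i<n1. m i ^ \<alpha> i)"
  have C: "C \<ge> 0" unfolding C_def c_def using m by (intro divide_nonneg_pos prod_nonneg prod_pos) auto
  show ?thesis
  proof (intro exI[of _ C] conjI allI C)
    fix k :: "real^'d"
    define u where "u = 1 + (norm k)\<^sup>2"
    have u: "u \<ge> 1" by (simp add: u_def)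
    have num0: "0 \<le> (\<Prod>j<n2. (b j)\<^sup>2 + (B j \<bullet> k)\<^sup>2)" by (intro prod_nonneg) auto
    have den0: "0 < (\<Prod>i<n1. ((\<kappa> i)\<^sup>2 + (norm k)\<^sup>2) ^ \<alpha> i)"
      using kap by (intro prod_pos zero_less_power) (auto intro: add_pos_nonneg)
    show "0 \<le> spec_dens n1 \<alpha> \<kappa> n2 b B k"
      unfolding spec_dens_def using num0 den0 by simp
    have num: "(\<Prod>j<n2. (b j)\<^sup>2 + (B j \<bullet> k)\<^sup>2) \<le> (\<Prod>j<n2. c j * u)"
    proof (intro prod_mono conjI)
      fix j
      have "(B j \<bullet> k)\<^sup>2 \<le> (norm (B j) * norm k)\<^sup>2"
        by (metis abs_ge_zero Cauchy_Schwarz_ineq2 power2_abs power_mono)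
      also have "\<dots> = (norm (B j))\<^sup>2 * (norm k)\<^sup>2" by (simp add: power_mult_distrib)
      finally have "(b j)\<^sup>2 + (B j \<bullet> k)\<^sup>2 \<le> (b j)\<^sup>2 + (norm (B j))\<^sup>2 * (norm k)\<^sup>2" by simp
      also have "\<dots> \<le> c j * u" unfolding c_def u_def
        by (simp add: algebra_simps)
      finally show "(b j)\<^sup>2 + (B j \<bullet> k)\<^sup>2 \<le> c j * u" .
    qed auto
    have den: "(\<Prod>i<n1. (m i * u) ^ \<alpha> i) \<le> (\<Prod>i<n1. ((\<kappa> i)\<^sup>2 + (norm k)\<^sup>2) ^ \<alpha> i)"
    proof (intro prod_mono conjI)
      fix i assume "i \<in> {..<n1}"
      hence i: "i < n1" by simp
      have "m i * u \<le> (\<kappa> i)\<^sup>2 + (norm k)\<^sup>2"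
        using m[OF i] kap i unfolding u_def m_def
        by (auto simp: min_def algebra_simps intro: mult_left_le)
      show "0 \<le> (m i * u) ^ \<alpha> i" using m[OF i] u by simp
      show "(m i * u) ^ \<alpha> i \<le> ((\<kappa> i)\<^sup>2 + (norm k)\<^sup>2) ^ \<alpha> i"
        using \<open>m i * u \<le> _\<close> m[OF i] u by (intro power_mono) auto
    qed
    have "(\<Prod>i<n1. (m i * u) ^ \<alpha> i) = (\<Prod>i<n1. m i ^ \<alpha> i) * u ^ (\<Sum>i<n1. \<alpha> i)"
      by (simp add: power_mult_distrib prod.distrib power_sum)
    moreover have "(\<Prod>j<n2. c j * u) = (\<Prod>j<n2. c j) * u ^ n2"
      by (simp add: prod.distrib)
    moreover have mp: "0 < (\<Prod>i<n1. m i ^ \<alpha> i)" using m by (intro prod_pos) auto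
    ultimately have "spec_dens n1 \<alpha> \<kappa> n2 b B k \<le> ((\<Prod>j<n2. c j) * u ^ n2) / ((\<Prod>i<n1. m i ^ \<alpha> i) * u ^ (\<Sum>i<n1. \<alpha> i))"
      unfolding spec_dens_def using num den num0 u
      by (intro frac_le) (auto intro!: mult_pos_pos)
    also have "\<dots> = C * (u ^ n2 / u ^ (\<Sum>i<n1. \<alpha> i))" by (simp add: C_def)
    also have "u ^ n2 / u ^ (\<Sum>i<n1. \<alpha> i) = u powr (real n2 - real (\<Sum>i<n1. \<alpha> i))"
    proof -
      have "u powr (real n2 - real (\<Sum>i<n1. \<alpha> i)) = u powr real n2 / u powr real (\<Sum>i<n1. \<alpha> i)"
        by (rule powr_diff)
      thus ?thesis using u by (simp only: powr_realpow)
    qed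
    finally show "spec_dens n1 \<alpha> \<kappa> n2 b B k \<le> C * (1 + (norm k)\<^sup>2) powr (real n2 - real (\<Sum>i<n1. \<alpha> i))"
      by (simp add: u_def)
  qed
qed

lemma spec_dens_measurable[measurable]:
  "spec_dens n1 \<alpha> \<kappa> n2 b B \<in> borel_measurable borel"
  unfolding spec_dens_def[abs_def] by measurable

lemma integrable_from_bound:
  fixes f :: "real^'d \<Rightarrow> real"
  assumes [measurable]: "f \<in> borel_measurable borel"
    and s: "s > CARD('d) / 2" and C: "C \<ge> 0"
    and le: "\<And>k. \<bar>f k\<bar> \<le> C * (1 + (norm k)\<^sup>2) powr (-s)"
  shows "integrable lborel f"
proof (rule integrableI_bounded)
  show "f \<in> borel_measurable lborel" by simp
  have "(\<integral>\<^sup>+k. ennreal (norm (f k)) \<partial>lborel) \<le> (\<integral>\<^sup>+k. ennreal C * ennreal ((1 + (norm (k::real^'d))\<^sup>2) powr (-s)) \<partial>lborel)"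
    using le C by (intro nn_integral_mono) (simp add: ennreal_mult[symmetric] ennreal_leI)
  also have "\<dots> = ennreal C * (\<integral>\<^sup>+k. ennreal ((1 + (norm (k::real^'d))\<^sup>2) powr (-s)) \<partial>lborel)"
    by (rule nn_integral_cmult) measurable
  also have "\<dots> < \<infinity>"
    using multiD_finite[where 'a="real^'d", of s] s by (simp add: ennreal_mult_less_top)
  finally show "(\<integral>\<^sup>+k. ennreal (norm (f k)) \<partial>lborel) < \<infinity>" .
qed

lemma spec_dens_props:
  fixes \<kappa> b :: "nat \<Rightarrow> real" and B :: "nat \<Rightarrow> real^'d"
  assumes kap: "\<forall>i<n1. (\<kappa> i)\<^sup>2 > 0"
    and ex: "2 * int (\<Sum>i<n1. \<alpha> i) - 2 * int n2 > int CARD('d)"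
  shows "\<And>k. spec_dens n1 \<alpha> \<kappa> n2 b B k \<ge> 0"
    "integrable lborel (spec_dens n1 \<alpha> \<kappa> n2 b B)"
    "integrable lborel (\<lambda>k. sqrt (norm k) * spec_dens n1 \<alpha> \<kappa> n2 b B k)"
proof -
  obtain C where C: "C \<ge> 0" and f: "\<And>k. 0 \<le> spec_dens n1 \<alpha> \<kappa> n2 b B k \<and>
     spec_dens n1 \<alpha> \<kappa> n2 b B k \<le> C * (1 + (norm k)\<^sup>2) powr (real n2 - real (\<Sum>i<n1. \<alpha> i))"
    using spec_dens_bound[OF kap] by blast
  define N where "N = real (\<Sum>i<n1. \<alpha> i) - real n2"
  have h: "int CARD('d) + 1 \<le> 2 * int (\<Sum>i<n1. \<alpha> i) - 2 * int n2" using ex by linarith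
  hence "real_of_int (int CARD('d) + 1) \<le> real_of_int (2 * int (\<Sum>i<n1. \<alpha> i) - 2 * int n2)"
    by (simp only: of_int_le_iff)
  hence N: "2 * N \<ge> real CARD('d) + 1" unfolding N_def by simp
  show "\<And>k. spec_dens n1 \<alpha> \<kappa> n2 b B k \<ge> 0" using f by blast
  show "integrable lborel (spec_dens n1 \<alpha> \<kappa> n2 b B)"
  proof (rule integrable_from_bound[where s=N and C=C])
    show "real CARD('d) / 2 < N" using N by simp
    fix k show "\<bar>spec_dens n1 \<alpha> \<kappa> n2 b B k\<bar> \<le> C * (1 + (norm k)\<^sup>2) powr - N"
      using f[of k] by (simp add: N_def)
  qed (auto simp: C)
  show "integrable lborel (\<lambda>k. sqrt (norm k) * spec_dens n1 \<alpha> \<kappa> n2 b B k)"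
  proof (rule integrable_from_bound[where s="N - 1/4" and C=C])
    show "real CARD('d) / 2 < N - 1/4" using N by simp
    fix k :: "real^'d"
    define u where "u = 1 + (norm k)\<^sup>2"
    have u: "u \<ge> 1" by (simp add: u_def)
    have sq: "sqrt (norm k) \<le> u powr (1/4)"
    proof -
      have "(u powr (1/4)) ^ 4 = u powr (real 4 * (1/4))" using u by (intro powr_power) auto
      also have "\<dots> = u" using u by simp
      finally have e: "(u powr (1/4)) ^ 4 = u" .
      have "sqrt (norm k) ^ 4 = (norm k)\<^sup>2"
      proof -
        have "sqrt (norm k) ^ 4 = (sqrt (norm k) ^ 2) ^ 2" by (simp only: power_mult[symmetric]) simp
        thus ?thesis by simp
      qed
      hence "sqrt (norm k) ^ 4 \<le> (u powr (1/4)) ^ 4" unfolding e by (simp add: u_def)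
      moreover have e4: "(4::nat) = Suc 3" by simp
      ultimately have "sqrt (norm k) ^ Suc 3 \<le> (u powr (1/4)) ^ Suc 3" by (simp only: e4)
      thus ?thesis by (rule power_le_imp_le_base) simp
    qed
    have "\<bar>sqrt (norm k) * spec_dens n1 \<alpha> \<kappa> n2 b B k\<bar> = sqrt (norm k) * spec_dens n1 \<alpha> \<kappa> n2 b B k"
      using f[of k] by simp
    also have "\<dots> \<le> u powr (1/4) * (C * u powr (-N))"
      using f[of k] sq by (intro mult_mono) (auto simp: N_def u_def)
    also have "\<dots> = C * u powr (-(N - 1/4))"
      using u by (simp add: powr_add[symmetric] algebra_simps)
    finally show "\<bar>sqrt (norm k) * spec_dens n1 \<alpha> \<kappa> n2 b B k\<bar> \<le> C * (1 + (norm k)\<^sup>2) powr - (N - 1/4)"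
      by (simp add: u_def)
  qed (auto simp: C)
qed

lemma gaussian_even_moment:
  assumes P: "prob_space M" and G: "gaussian_rv M Z" and E0: "(\<integral>\<omega>. Z \<omega> \<partial>M) = 0"
  shows "integrable M (\<lambda>\<omega>. Z \<omega> ^ (2*m)) \<and>
    (\<integral>\<omega>. Z \<omega> ^ (2*m) \<partial>M) = fact (2*m) / (2^m * fact m) * (\<integral>\<omega>. Z \<omega> ^ 2 \<partial>M) ^ m"
proof -
  interpret prob_space M by (rule P)
  have Zm[measurable]: "Z \<in> borel_measurable M" using G by (simp add: gaussian_rv_def)
  from G obtain mu sigma where
    cases: "(sigma > 0 \<and> distributed M lborel Z (\<lambda>x. ennreal (normal_density mu sigma x)))
               \<or> distr M borel Z = return borel mu"
    by (auto simp: gaussian_rv_def)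
  thus ?thesis
  proof
    assume A: "sigma > 0 \<and> distributed M lborel Z (\<lambda>x. ennreal (normal_density mu sigma x))"
    hence s: "sigma > 0" and D: "distributed M lborel Z (normal_density mu sigma)" by auto
    have "expectation Z = mu" by (rule normal_distributed_expectation[OF s D])
    hence mu: "mu = 0" using E0 by simp
    have gen: "integrable M (\<lambda>\<omega>. Z \<omega> ^ (2*j)) \<and> (\<integral>\<omega>. Z \<omega> ^ (2*j) \<partial>M) = fact (2 * j) / ((2 / sigma\<^sup>2)^j * fact j)" for j
    proof
      have hb: "has_bochner_integral lborel (\<lambda>x. normal_density 0 sigma x * x ^ (2*j)) (fact (2 * j) / ((2 / sigma\<^sup>2)^j * fact j))"
        using normal_moment_even[OF s, of 0 j] by simp
      have "integrable lborel (\<lambda>x. normal_density mu sigma x * x ^ (2*j))"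
        using hb mu by (simp add: has_bochner_integral_iff)
      thus "integrable M (\<lambda>\<omega>. Z \<omega> ^ (2*j))"
        using distributed_integrable[OF D, of "\<lambda>x. x ^ (2*j)"] by simp
      have "(\<integral>\<omega>. Z \<omega> ^ (2*j) \<partial>M) = (\<integral>x. normal_density mu sigma x * x ^ (2*j) \<partial>lborel)"
        using distributed_integral[OF D, of "\<lambda>x. x ^ (2*j)"] by simp
      also have "\<dots> = fact (2 * j) / ((2 / sigma\<^sup>2)^j * fact j)"
        using hb mu by (simp add: has_bochner_integral_integral_eq)
      finally show "(\<integral>\<omega>. Z \<omega> ^ (2*j) \<partial>M) = fact (2 * j) / ((2 / sigma\<^sup>2)^j * fact j)" .
    qed
    have v: "(\<integral>\<omega>. Z \<omega> ^ 2 \<partial>M) = sigma\<^sup>2"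
      using gen[of 1] by simp
    show ?thesis using gen[of m] s unfolding v
      by (simp add: power_divide field_simps power_mult_distrib flip: power_mult)
  next
    assume R: "distr M borel Z = return borel mu"
    have "AE x in distr M borel Z. x = mu" unfolding R by (subst AE_return) auto
    hence ae: "AE \<omega> in M. Z \<omega> = mu" by (rule AE_distrD[OF Zm])
    have "(\<integral>\<omega>. Z \<omega> \<partial>M) = (\<integral>\<omega>. mu \<partial>M)" by (rule integral_cong_AE) (use ae in auto)
    hence mu: "mu = 0" using E0 by (simp add: prob_space)
    have ae2: "AE \<omega> in M. Z \<omega> ^ j = 0 ^ j" for j using ae mu by auto
    have I: "integrable M (\<lambda>\<omega>. Z \<omega> ^ j)" for j
      by (rule integrable_cong_AE_imp[OF _ _ AE_mp[OF ae2 AE_I2]]) (auto simp: eq_commute)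
    have V: "(\<integral>\<omega>. Z \<omega> ^ j \<partial>M) = 0 ^ j" for j
      using integral_cong_AE[OF _ _ ae2] by (simp add: prob_space)
    show ?thesis using I[of "2*m"] V[of "2*m"] V[of 2] by (cases m) (simp_all add: prob_space)
  qed
qed

lemma gaussian_rv_integrable:
  assumes P: "prob_space M" and G: "gaussian_rv M Z"
  shows "integrable M Z"
proof -
  interpret prob_space M by (rule P)
  have Zm[measurable]: "Z \<in> borel_measurable M" using G by (simp add: gaussian_rv_def)
  from G obtain mu sigma where
    cases: "(sigma > 0 \<and> distributed M lborel Z (\<lambda>x. ennreal (normal_density mu sigma x)))
               \<or> distr M borel Z = return borel mu"
    by (auto simp: gaussian_rv_def)
  thus ?thesis
  proof
    assume A: "sigma > 0 \<and> distributed M lborel Z (\<lambda>x. ennreal (normal_density mu sigma x))"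
    hence s: "sigma > 0" and D: "distributed M lborel Z (normal_density mu sigma)" by auto
    show ?thesis
      using distributed_integrable[OF D, of "\<lambda>x. x"] integrable_normal_moment_nz_1[OF s, of mu] by simp
  next
    assume R: "distr M borel Z = return borel mu"
    have "AE x in distr M borel Z. x = mu" unfolding R by (subst AE_return) auto
    hence ae: "AE \<omega> in M. Z \<omega> = mu" by (rule AE_distrD[OF Zm])
    show ?thesis
      by (rule integrable_cong_AE_imp[OF _ _ AE_mp[OF ae AE_I2]]) (auto simp: eq_commute)
  qed
qed

lemma one_minus_cos_le: "1 - cos x \<le> 2 * sqrt \<bar>x\<bar>"
proof -
  define a where "a = \<bar>sin (x/2)\<bar>"
  have a0: "0 \<le> a" and a1: "a \<le> 1" and ax: "a \<le> \<bar>x\<bar>/2"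
    using abs_sin_x_le_abs_x[of "x/2"] by (auto simp: a_def)
  have "cos x = cos (2 * (x/2))" by simp
  also have "\<dots> = 1 - 2 * a\<^sup>2" by (simp only: cos_double_sin a_def power2_abs)
  finally have c: "1 - cos x = 2 * a\<^sup>2" by simp
  have "a\<^sup>2 \<le> a" using a0 a1 by (simp add: power2_eq_square mult_left_le)
  also have "a \<le> sqrt a"
  proof -
    have "a * a \<le> a" using a0 a1 by (simp add: mult_left_le)
    hence "sqrt (a * a) \<le> sqrt a" by (rule real_sqrt_le_mono)
    thus ?thesis using a0 by simp
  qed
  also have "sqrt a \<le> sqrt \<bar>x\<bar>" using ax by (intro real_sqrt_le_mono) simp
  finally show ?thesis using c by simp
qed

lemma one_minus_cos_inner_le:
  fixes k h :: "real^'d"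
  shows "1 - cos (k \<bullet> h) \<le> 2 * sqrt (norm h) * sqrt (norm k)"
proof -
  have "1 - cos (k \<bullet> h) \<le> 2 * sqrt \<bar>k \<bullet> h\<bar>" by (rule one_minus_cos_le)
  also have "\<bar>k \<bullet> h\<bar> \<le> norm k * norm h" by (rule Cauchy_Schwarz_ineq2)
  hence "sqrt \<bar>k \<bullet> h\<bar> \<le> sqrt (norm h) * sqrt (norm k)"
    by (metis mult.commute real_sqrt_le_mono real_sqrt_mult)
  finally show ?thesis by simp
qed

lemma increments:
  fixes M :: "'a measure" and X :: "real^'d \<Rightarrow> 'a \<Rightarrow> real"
    and n1 n2 :: nat and \<alpha> :: "nat \<Rightarrow> nat" and \<kappa> :: "nat \<Rightarrow> real"
    and b :: "nat \<Rightarrow> real" and B :: "nat \<Rightarrow> real^'d"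
  assumes P: "prob_space M"
    and kap: "\<forall>i<n1. (\<kappa> i)\<^sup>2 > 0"
    and SG: "stationary_gaussian_with_spectral_density M X (spec_dens n1 \<alpha> \<kappa> n2 b B)"
    and ex: "2 * int (\<Sum>i<n1. \<alpha> i) - 2 * int n2 > int CARD('d)"
  shows "\<exists>A\<ge>0. \<forall>s t. X s \<in> borel_measurable M \<and> gaussian_rv M (\<lambda>\<omega>. X s \<omega> - X t \<omega>) \<and>
     (\<integral>\<omega>. X s \<omega> - X t \<omega> \<partial>M) = 0 \<and> integrable M (\<lambda>\<omega>. (X s \<omega> - X t \<omega>)^2) \<and>
     (\<integral>\<omega>. (X s \<omega> - X t \<omega>)^2 \<partial>M) \<le> A * sqrt (norm (s - t))"
proof -
  interpret prob_space M by (rule P)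
  define f where "f = spec_dens n1 \<alpha> \<kappa> n2 b B"
  note fp = spec_dens_props[OF kap ex, of b B, folded f_def]
  have fm[measurable]: "f \<in> borel_measurable borel" unfolding f_def by measurable
  from SG obtain c where GF: "gaussian_field M X" and c: "c > 0" and
    cov: "\<And>s t. integrable M (\<lambda>\<omega>. X s \<omega> * X t \<omega>) \<and> (\<integral>\<omega>. X s \<omega> \<partial>M) = 0 \<and>
        (\<integral>\<omega>. X s \<omega> * X t \<omega> \<partial>M) = c * (\<integral>k. cos (k \<bullet> (s - t)) * f k \<partial>lborel)"
    unfolding stationary_gaussian_with_spectral_density_def f_def by blast
  define I where "I = (\<integral>k. sqrt (norm k) * f k \<partial>lborel)"
  have I0: "I \<ge> 0" unfolding I_def using fp(1) by (intro integral_nonneg_AE) auto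
  have grv: "gaussian_rv M (\<lambda>\<omega>. X s \<omega> - X t \<omega>)" for s t
  proof (cases "s = t")
    case True
    have "gaussian_rv M (\<lambda>\<omega>. \<Sum>r\<in>{}. (\<lambda>_. 1) r * X r \<omega>)"
      using GF[unfolded gaussian_field_def, rule_format, of "{}" "\<lambda>_. 1"] by simp
    thus ?thesis using True by simp
  next
    case False
    have "gaussian_rv M (\<lambda>\<omega>. \<Sum>r\<in>{s,t}. (\<lambda>r. if r = s then 1 else -1) r * X r \<omega>)"
      using GF[unfolded gaussian_field_def, rule_format, of "{s,t}" "\<lambda>r. if r = s then 1 else -1"] by simp
    thus ?thesis using False by simp
  qed
  have grv1: "gaussian_rv M (X s)" for s
  proof -
    have "gaussian_rv M (\<lambda>\<omega>. \<Sum>r\<in>{s}. (\<lambda>_. 1) r * X r \<omega>)"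
      using GF[unfolded gaussian_field_def, rule_format, of "{s}" "\<lambda>_. 1"] by simp
    thus ?thesis by simp
  qed
  have Xm: "X s \<in> borel_measurable M" for s using grv1[of s] by (simp add: gaussian_rv_def)
  have Xi: "integrable M (X s)" for s by (rule gaussian_rv_integrable[OF P grv1])
  have cosi: "integrable lborel (\<lambda>k. cos (k \<bullet> h) * f k)" for h
    by (rule Bochner_Integration.integrable_bound[OF fp(2)]) (use fp(1) in \<open>simp_all add: abs_mult mult_left_le_one_le\<close>)
  show ?thesis
  proof (intro exI[of _ "4 * c * I"] conjI allI)
    show "0 \<le> 4 * c * I" using c I0 by simp
    fix s t
    show "X s \<in> borel_measurable M" by (rule Xm)
    show "gaussian_rv M (\<lambda>\<omega>. X s \<omega> - X t \<omega>)" by (rule grv)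
    show "(\<integral>\<omega>. X s \<omega> - X t \<omega> \<partial>M) = 0"
      using cov[of s s] cov[of t t] by (simp add: Bochner_Integration.integral_diff[OF Xi Xi])
    have eq: "(\<lambda>\<omega>. (X s \<omega> - X t \<omega>)^2) = (\<lambda>\<omega>. X s \<omega> * X s \<omega> + X t \<omega> * X t \<omega> - 2 * (X s \<omega> * X t \<omega>))"
      by (auto simp: power2_eq_square algebra_simps)
    have i1: "integrable M (\<lambda>\<omega>. X s \<omega> * X s \<omega>)" "integrable M (\<lambda>\<omega>. X t \<omega> * X t \<omega>)"
      "integrable M (\<lambda>\<omega>. X s \<omega> * X t \<omega>)" using cov by auto
    show "integrable M (\<lambda>\<omega>. (X s \<omega> - X t \<omega>)^2)" unfolding eq using i1 by simp
    have "(\<integral>\<omega>. (X s \<omega> - X t \<omega>)^2 \<partial>M) = c * (\<integral>k. f k \<partial>lborel) + c * (\<integral>k. f k \<partial>lborel)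
        - 2 * (c * (\<integral>k. cos (k \<bullet> (s - t)) * f k \<partial>lborel))"
      unfolding eq using i1 cov[of s s] cov[of t t] cov[of s t] by simp
    also have "\<dots> = 2 * c * (\<integral>k. (1 - cos (k \<bullet> (s - t))) * f k \<partial>lborel)"
      using fp(2) cosi[of "s - t"] by (simp add: left_diff_distrib algebra_simps)
    also have "(\<integral>k. (1 - cos (k \<bullet> (s - t))) * f k \<partial>lborel) \<le> (\<integral>k. (2 * sqrt (norm (s - t))) * (sqrt (norm k) * f k) \<partial>lborel)"
    proof (rule integral_mono)
      show "integrable lborel (\<lambda>k. (1 - cos (k \<bullet> (s - t))) * f k)"
        using fp(2) cosi[of "s - t"] by (simp add: left_diff_distrib)
      show "integrable lborel (\<lambda>k. (2 * sqrt (norm (s - t))) * (sqrt (norm k) * f k))"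
        using fp(3) by simp
      fix k :: "real^'d"
      show "(1 - cos (k \<bullet> (s - t))) * f k \<le> (2 * sqrt (norm (s - t))) * (sqrt (norm k) * f k)"
        using mult_right_mono[OF one_minus_cos_inner_le[of k "s - t"] fp(1)[of k]] by (simp add: ac_simps)
    qed
    also have "(\<integral>k. (2 * sqrt (norm (s - t))) * (sqrt (norm k) * f k) \<partial>lborel) = 2 * sqrt (norm (s - t)) * I"
      unfolding I_def by simp
    finally show "(\<integral>\<omega>. (X s \<omega> - X t \<omega>)^2 \<partial>M) \<le> 4 * c * I * sqrt (norm (s - t))"
      using c by (simp add: mult_left_mono algebra_simps)
  qed
qed

definition trunc :: "nat \<Rightarrow> real^'d \<Rightarrow> real^'d" where
  "trunc n s = (\<chi> i. of_int \<lfloor>2^n * s$i\<rfloor> / 2^n)"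

definition grid :: "nat \<Rightarrow> nat \<Rightarrow> (real^'d) set" where
  "grid K n = {p. \<forall>i. \<exists>z::int. p$i = of_int z / 2^n \<and> \<bar>z\<bar> \<le> int K * 2^n}"

definition pairs :: "nat \<Rightarrow> nat \<Rightarrow> ((real^'d) \<times> (real^'d)) set" where
  "pairs K n = {(p,q). p \<in> grid K n \<and> q \<in> grid K n \<and> (\<forall>i. \<bar>p$i - q$i\<bar> \<le> 1/2^n)}"

lemma grid_subset_image:
  "grid K n \<subseteq> (\<lambda>z. \<chi> i. of_int (z i) / 2^n) ` (PiE UNIV (\<lambda>_. {-(int K * 2^n)..int K * 2^n}))"
proof
  fix p :: "real^'d" assume "p \<in> grid K n"
  hence "\<forall>i. \<exists>z::int. p$i = of_int z / 2^n \<and> \<bar>z\<bar> \<le> int K * 2^n" by (simp add: grid_def)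
  then obtain z where z: "\<And>i. p$i = of_int (z i) / 2^n \<and> \<bar>z i\<bar> \<le> int K * 2^n" by metis
  have "p = (\<chi> i. of_int (z i) / 2^n)" using z by (simp add: vec_eq_iff)
  moreover have "z \<in> PiE UNIV (\<lambda>_. {-(int K * 2^n)..int K * 2^n})"
  proof -
    have "z i \<in> {-(int K * 2^n)..int K * 2^n}" for i using z[of i] by (simp add: abs_le_iff)
    thus ?thesis by auto
  qed
  ultimately show "p \<in> (\<lambda>z. \<chi> i. of_int (z i) / 2^n) ` (PiE UNIV (\<lambda>_. {-(int K * 2^n)..int K * 2^n}))"
    by blast
qed

lemma grid_finite: "finite (grid K n :: (real^'d) set)"
  by (rule finite_subset[OF grid_subset_image]) (auto intro!: finite_PiE)

lemma grid_card: "card (grid K n :: (real^'d) set) \<le> (2 * K * 2^n + 1) ^ CARD('d)"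
proof -
  have "card (grid K n :: (real^'d) set) \<le> card ((\<lambda>z. (\<chi> i. of_int (z i) / 2^n) :: real^'d) ` (PiE (UNIV::'d set) (\<lambda>_. {-(int K * 2^n)..int K * 2^n})))"
    by (intro card_mono grid_subset_image) (auto intro!: finite_PiE)
  also have "\<dots> \<le> card (PiE (UNIV::'d set) (\<lambda>_. {-(int K * 2^n)..int K * 2^n}))"
    by (rule card_image_le) (auto intro!: finite_PiE)
  also have "\<dots> = (\<Prod>i\<in>(UNIV::'d set). card {-(int K * 2^n)..int K * 2^n})"
    by (rule card_PiE) simp
  also have "\<dots> = (2 * K * 2^n + 1) ^ CARD('d)"
    by (simp add: card_atLeastAtMost_int nat_add_distrib nat_mult_distrib nat_power_eq ac_simps)
  finally show ?thesis .
qed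

lemma pairs_finite: "finite (pairs K n :: ((real^'d) \<times> (real^'d)) set)"
  by (rule finite_subset[of _ "grid K n \<times> grid K n"]) (auto simp: pairs_def grid_finite)

lemma pairs_card: "card (pairs K n :: ((real^'d) \<times> (real^'d)) set) \<le> (2 * K * 2^n + 1) ^ (2 * CARD('d))"
proof -
  have "card (pairs K n :: ((real^'d) \<times> (real^'d)) set) \<le> card (grid K n \<times> grid K n :: ((real^'d) \<times> (real^'d)) set)"
    by (intro card_mono) (auto simp: pairs_def grid_finite)
  also have "\<dots> = card (grid K n :: (real^'d) set) ^ 2" by (simp add: card_cartesian_product power2_eq_square)
  also have "\<dots> \<le> ((2 * K * 2^n + 1) ^ CARD('d)) ^ 2" by (intro power_mono grid_card) simp
  also have "\<dots> = (2 * K * 2^n + 1) ^ (2 * CARD('d))" by (simp add: power_mult[symmetric] mult.commute)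
  finally show ?thesis .
qed

lemma floor_step: "2 * \<lfloor>y\<rfloor> \<le> \<lfloor>2 * y\<rfloor> \<and> \<lfloor>2 * y\<rfloor> \<le> 2 * \<lfloor>y\<rfloor> + 1" for y :: real
proof
  show "2 * \<lfloor>y\<rfloor> \<le> \<lfloor>2 * y\<rfloor>" by (simp add: le_floor_iff)
  show "\<lfloor>2 * y\<rfloor> \<le> 2 * \<lfloor>y\<rfloor> + 1"
  proof -
    have "real_of_int \<lfloor>2 * y\<rfloor> \<le> 2 * y" by simp
    also have "2 * y < 2 * of_int \<lfloor>y\<rfloor> + 2" by linarith
    finally have "\<lfloor>2 * y\<rfloor> < 2 * \<lfloor>y\<rfloor> + 2" by linarith
    thus ?thesis by linarith
  qed
qed

lemma floor_close: "\<bar>a - b\<bar> \<le> 1 \<Longrightarrow> \<bar>\<lfloor>a\<rfloor> - \<lfloor>b\<rfloor>\<bar> \<le> 1" for a b :: real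
  by linarith

lemma floor_abs_bound:
  fixes x :: real and c :: int
  assumes h: "\<bar>x\<bar> \<le> of_int c"
  shows "\<bar>\<lfloor>x\<rfloor>\<bar> \<le> c"
proof -
  have "-c \<le> \<lfloor>x\<rfloor>" using h by (simp add: le_floor_iff abs_le_iff)
  moreover have "\<lfloor>x\<rfloor> \<le> c" using h by (simp add: floor_le_iff abs_le_iff)
  ultimately show ?thesis by (simp add: abs_le_iff)
qed

lemma trunc_grid:
  assumes "\<forall>i. \<bar>s$i\<bar> \<le> real K"
  shows "trunc n s \<in> grid K n"
  unfolding grid_def trunc_def
proof (safe)
  fix i
  have "\<bar>2^n * s$i\<bar> \<le> real K * 2^n" using assms by (simp add: abs_mult mult.commute)
  hence "\<bar>\<lfloor>2^n * s$i\<rfloor>\<bar> \<le> int K * 2^n" by (intro floor_abs_bound) simp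
  thus "\<exists>z. (\<chi> i. real_of_int \<lfloor>2 ^ n * s $ i\<rfloor> / 2 ^ n) $ i = real_of_int z / 2 ^ n \<and> \<bar>z\<bar> \<le> int K * 2 ^ n"
    by auto
qed

lemma trunc_step_pair:
  assumes "\<forall>i. \<bar>s$i\<bar> \<le> real K"
  shows "(trunc n s, trunc (Suc n) s) \<in> pairs K (Suc n)"
proof -
  have g: "trunc (Suc n) s \<in> grid K (Suc n)" by (rule trunc_grid[OF assms])
  have g2: "trunc n s \<in> grid K (Suc n)"
  proof -
    have "\<bar>2^n * s$i\<bar> \<le> real K * 2^n" for i using assms by (simp add: abs_mult mult.commute)
    hence b: "\<bar>\<lfloor>2^n * s$i\<rfloor>\<bar> \<le> int K * 2^n" for i by (intro floor_abs_bound) simp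
    show ?thesis unfolding grid_def
    proof (safe)
      fix i
      show "\<exists>z. trunc n s $ i = real_of_int z / 2 ^ Suc n \<and> \<bar>z\<bar> \<le> int K * 2 ^ Suc n"
        by (rule exI[of _ "2 * \<lfloor>2^n * s$i\<rfloor>"]) (use b[of i] in \<open>simp add: trunc_def abs_mult\<close>)
    qed
  qed
  have "\<bar>trunc n s $ i - trunc (Suc n) s $ i\<bar> \<le> 1/2^Suc n" for i
  proof -
    define y where "y = 2^n * s$i"
    have e: "2^Suc n * s$i = 2 * y" by (simp add: y_def)
    have "trunc (Suc n) s $ i - trunc n s $ i = (of_int \<lfloor>2 * y\<rfloor> - 2 * of_int \<lfloor>y\<rfloor>) / 2^Suc n"
      by (simp add: trunc_def e y_def field_simps)
    moreover have "0 \<le> real_of_int \<lfloor>2 * y\<rfloor> - 2 * of_int \<lfloor>y\<rfloor>" "of_int \<lfloor>2 * y\<rfloor> - 2 * of_int \<lfloor>y\<rfloor> \<le> (1::real)"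
      using floor_step[of y] by linarith+
    ultimately have "0 \<le> trunc (Suc n) s $ i - trunc n s $ i" "trunc (Suc n) s $ i - trunc n s $ i \<le> 1/2^Suc n"
      by (simp_all add: divide_right_mono del: power_Suc)
    thus ?thesis by (simp add: abs_le_iff del: power_Suc)
  qed
  thus ?thesis using g g2 by (simp add: pairs_def)
qed

lemma trunc_pair:
  assumes s: "\<forall>i. \<bar>s$i\<bar> \<le> real K" and t: "\<forall>i. \<bar>t$i\<bar> \<le> real K"
    and st: "\<forall>i. \<bar>s$i - t$i\<bar> \<le> 1/2^m"
  shows "(trunc m s, trunc m t) \<in> pairs K m"
proof -
  have "\<bar>trunc m s $ i - trunc m t $ i\<bar> \<le> 1/2^m" for i
  proof -
    have "\<bar>2^m * s$i - 2^m * t$i\<bar> = 2^m * \<bar>s$i - t$i\<bar>" by (simp add: right_diff_distrib[symmetric] abs_mult)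
    also have "\<dots> \<le> 2^m * (1/2^m)" using st by (intro mult_left_mono) auto
    finally have "\<bar>2^m * s$i - 2^m * t$i\<bar> \<le> 1" by simp
    hence "\<bar>\<lfloor>2^m * s$i\<rfloor> - \<lfloor>2^m * t$i\<rfloor>\<bar> \<le> 1" by (rule floor_close)
    hence "\<bar>real_of_int \<lfloor>2^m * s$i\<rfloor> - real_of_int \<lfloor>2^m * t$i\<rfloor>\<bar> \<le> 1" by linarith
    hence "\<bar>real_of_int \<lfloor>2^m * s$i\<rfloor> - real_of_int \<lfloor>2^m * t$i\<rfloor>\<bar> / 2^m \<le> 1/2^m"
      by (intro divide_right_mono) auto
    thus ?thesis by (simp add: trunc_def diff_divide_distrib[symmetric])
  qed
  thus ?thesis using trunc_grid[OF s] trunc_grid[OF t] by (simp add: pairs_def)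
qed

lemma trunc_close: "\<bar>trunc n s $ i - s $ i\<bar> \<le> 1/2^n"
proof -
  define x where "x = 2^n * s$i"
  have x: "real_of_int \<lfloor>x\<rfloor> \<le> x" "x - real_of_int \<lfloor>x\<rfloor> \<le> 1" by linarith+
  have e: "s$i - real_of_int \<lfloor>x\<rfloor> / 2^n = (x - real_of_int \<lfloor>x\<rfloor>) / 2^n" by (simp add: x_def field_simps)
  have "0 \<le> s$i - real_of_int \<lfloor>x\<rfloor> / 2^n" "s$i - real_of_int \<lfloor>x\<rfloor> / 2^n \<le> 1/2^n"
    unfolding e using x by (auto intro: divide_right_mono)
  hence "0 \<le> s$i - real_of_int \<lfloor>2^n * s$i\<rfloor> / 2^n" "s$i - real_of_int \<lfloor>2^n * s$i\<rfloor> / 2^n \<le> 1/2^n"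
    by (simp_all add: x_def)
  thus ?thesis by (simp add: trunc_def abs_le_iff)
qed

lemma norm_le_card: 
  fixes x :: "real^'d"
  assumes "\<forall>i. \<bar>x$i\<bar> \<le> e"
  shows "norm x \<le> real CARD('d) * e"
proof -
  have "norm x \<le> (\<Sum>i\<in>UNIV. \<bar>x$i\<bar>)" by (rule norm_le_l1_cart)
  also have "\<dots> \<le> (\<Sum>i\<in>(UNIV::'d set). e)" using assms by (intro sum_mono) auto
  finally show ?thesis by simp
qed

lemma trunc_norm: "norm (trunc n s - s) \<le> real CARD('d) / 2^n" for s :: "real^'d"
  using norm_le_card[of "trunc n s - s" "1/2^n"] trunc_close[of n s] by simp

lemma pairs_norm: "(p, q) \<in> pairs K n \<Longrightarrow> norm (p - q) \<le> real CARD('d) / 2^n" for p q :: "real^'d"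
  using norm_le_card[of "p - q" "1/2^n"] by (simp add: pairs_def)

lemma geom_sum_eq: "m \<le> n \<Longrightarrow> (\<Sum>j\<in>{m..<n}. r^(Suc j)) * (1 - r) = r^(Suc m) - r^(Suc n)" for r :: real
proof (induction n rule: dec_induct)
  case base thus ?case by simp
next
  case (step n)
  have "(\<Sum>j\<in>{m..<Suc n}. r^(Suc j)) = (\<Sum>j\<in>{m..<n}. r^(Suc j)) + r^(Suc n)"
    using step.hyps by simp
  hence "(\<Sum>j\<in>{m..<Suc n}. r^(Suc j)) * (1 - r) = (\<Sum>j\<in>{m..<n}. r^(Suc j)) * (1 - r) + r^(Suc n) * (1 - r)"
    by (simp only: distrib_right)
  also have "\<dots> = r^(Suc m) - r^(Suc n) + r^(Suc n) * (1 - r)" by (simp only: step.IH)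
  also have "\<dots> = r^(Suc m) - r^(Suc (Suc n))" by (simp only: power_Suc2[of r "Suc n"] algebra_simps)
  finally show ?case .
qed

lemma geom_sum_le:
  fixes r :: real
  assumes "m \<le> n" "0 \<le> r" "r < 1"
  shows "(\<Sum>j\<in>{m..<n}. r^(Suc j)) \<le> r^m / (1 - r)"
proof -
  have "(\<Sum>j\<in>{m..<n}. r^(Suc j)) * (1 - r) \<le> r^m"
  proof -
    have "r^(Suc m) \<le> r^m" using assms by (simp add: mult_left_le_one_le[of "r^m" r])
    moreover have "0 \<le> r^(Suc n)" using assms by simp
    ultimately show ?thesis using geom_sum_eq[OF assms(1), of r] by linarith
  qed
  thus ?thesis using assms by (simp add: field_simps)
qed

lemma chain_one:
  fixes g :: "real^'d \<Rightarrow> real"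
  assumes H: "\<And>n p q. (p, q) \<in> pairs K n \<Longrightarrow> \<bar>g p - g q\<bar> \<le> B * r^n"
    and s: "\<forall>i. \<bar>s$i\<bar> \<le> real K" and B: "B \<ge> 0" and r: "0 \<le> r" "r < 1"
    and mn: "m \<le> n"
  shows "\<bar>g (trunc n s) - g (trunc m s)\<bar> \<le> B * r^m / (1 - r)"
proof -
  have "\<bar>g (trunc n s) - g (trunc m s)\<bar> \<le> B * (\<Sum>j\<in>{m..<n}. r^(Suc j))"
    using mn
  proof (induction n rule: dec_induct)
    case base thus ?case by simp
  next
    case (step n)
    have "\<bar>g (trunc (Suc n) s) - g (trunc m s)\<bar> \<le> \<bar>g (trunc n s) - g (trunc (Suc n) s)\<bar> + \<bar>g (trunc n s) - g (trunc m s)\<bar>"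
      by linarith
    also have "\<dots> \<le> B * r^(Suc n) + B * (\<Sum>j\<in>{m..<n}. r^(Suc j))"
      using H[OF trunc_step_pair[OF s, of n]] step.IH by linarith
    also have "\<dots> = B * (\<Sum>j\<in>{m..<Suc n}. r^(Suc j))"
      using step.hyps by (simp add: algebra_simps)
    finally show ?case .
  qed
  also have "\<dots> \<le> B * (r^m / (1 - r))" using geom_sum_le[OF mn r] B by (intro mult_left_mono)
  finally show ?thesis by simp
qed

lemma chain:
  fixes g :: "real^'d \<Rightarrow> real"
  assumes H: "\<And>n p q. (p, q) \<in> pairs K n \<Longrightarrow> \<bar>g p - g q\<bar> \<le> B * r^n"
    and s: "\<forall>i. \<bar>s$i\<bar> \<le> real K" and t: "\<forall>i. \<bar>t$i\<bar> \<le> real K"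
    and st: "\<forall>i. \<bar>s$i - t$i\<bar> \<le> 1/2^m"
    and B: "B \<ge> 0" and r: "0 \<le> r" "r < 1"
    and mn: "m \<le> n" "m \<le> n'"
  shows "\<bar>g (trunc n s) - g (trunc n' t)\<bar> \<le> 3 * B * r^m / (1 - r)"
proof -
  have a: "\<bar>g (trunc n s) - g (trunc m s)\<bar> \<le> B * r^m / (1 - r)" by (rule chain_one[OF H s B r mn(1)])
  have b: "\<bar>g (trunc n' t) - g (trunc m t)\<bar> \<le> B * r^m / (1 - r)" by (rule chain_one[OF H t B r mn(2)])
  have c: "\<bar>g (trunc m s) - g (trunc m t)\<bar> \<le> B * r^m" by (rule H[OF trunc_pair[OF s t st]])
  define L where "L = B * r^m / (1 - r)"
  have "B * r^m \<le> B * r^m / (1 - r)" using B r by (simp add: field_simps mult_left_le_one_le)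
  moreover have "3 * B * r^m / (1 - r) = 3 * L" by (simp add: L_def)
  ultimately show ?thesis using a b c unfolding L_def[symmetric] by linarith
qed

lemma pow_powr_swap: "0 < a \<Longrightarrow> (a^n) powr e = (a powr e)^n" for a e :: real
proof -
  assume a: "0 < a"
  have "(a^n) powr e = (a powr real n) powr e" using a by (simp add: powr_realpow)
  also have "\<dots> = a powr (real n * e)" by (rule powr_powr)
  also have "\<dots> = (a powr e)^n" using a by (simp add: powr_power)
  finally show ?thesis .
qed

lemma abs_root_eq: "0 < k \<Longrightarrow> \<bar>x\<bar> = (\<bar>x\<bar>^k) powr (1 / real k)" for x :: real
proof (cases "x = 0")
  case True thus "0 < k \<Longrightarrow> ?thesis" by simp
next
  case False
  assume k: "0 < k"
  have "(\<bar>x\<bar>^k) powr (1 / real k) = (\<bar>x\<bar> powr real k) powr (1 / real k)" using False by (simp add: powr_realpow)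
  also have "\<dots> = \<bar>x\<bar> powr (real k * (1 / real k))" by (rule powr_powr)
  also have "\<dots> = \<bar>x\<bar>" using k False by simp
  finally show ?thesis by simp
qed

lemma root_bound:
  fixes x S :: real
  assumes h: "x^(4*Q) \<le> S * (1/2)^n" and Q: "Q > 0"
  shows "\<bar>x\<bar> \<le> S powr (1/(4*Q)) * ((1/2) powr (1/(4*Q)))^n"
proof -
  define e where "e = 1 / real (4*Q)"
  have e: "e \<ge> 0" by (simp add: e_def)
  have xa: "x^(4*Q) = \<bar>x\<bar>^(4*Q)" by (simp add: power_even_abs)
  have S: "S \<ge> 0"
  proof -
    have "0 \<le> x^(4*Q)" by (simp add: xa)
    hence "0 \<le> S * (1/2)^n" using h by linarith
    moreover have "0 < (1/2::real)^n" by simp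
    ultimately show ?thesis by (simp add: zero_le_mult_iff not_le[symmetric])
  qed
  have "\<bar>x\<bar> = (\<bar>x\<bar>^(4*Q)) powr e" unfolding e_def using Q by (intro abs_root_eq) simp
  also have "\<dots> \<le> (S * (1/2)^n) powr e" using h xa e by (intro powr_mono2) auto
  also have "\<dots> = S powr e * ((1/2)^n) powr e" using S by (simp add: powr_mult)
  also have "((1/2::real)^n) powr e = ((1/2) powr e)^n" by (rule pow_powr_swap) simp
  finally show ?thesis by (simp add: e_def)
qed

lemma small_geom:
  fixes r B e :: real
  assumes "0 \<le> r" "r < 1" "0 \<le> B" "e > 0"
  shows "\<exists>m. 3 * B * r^m / (1 - r) < e"
proof -
  have "(\<lambda>m. 3 * B * r^m / (1 - r)) \<longlonglongrightarrow> 3 * B * 0 / (1 - r)"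
    using assms by (intro tendsto_intros LIMSEQ_power_zero) auto
  hence "eventually (\<lambda>m. 3 * B * r^m / (1 - r) < e) sequentially"
    using assms by (intro order_tendstoD(2)) auto
  thus ?thesis by (auto simp: eventually_sequentially)
qed

lemma Lam_bound_alg:
  fixes K n d Q :: nat and C0 :: real
  assumes Q: "Q = 2 * d + 2" and C0: "C0 \<ge> 0"
  shows "real ((2*K*2^n+1)^(2*d)) * (C0 * (real d / 2^n)^Q) \<le> (real (2*K+1))^(2*d) * C0 * real d ^ Q * (1/4)^n"
proof -
  have a: "real ((2*K*2^n+1)^(2*d)) \<le> (real (2*K+1) * 2^n)^(2*d)"
  proof -
    have "real (2*K*2^n+1) \<le> real (2*K+1) * 2^n"
    proof -
      have "(1::real) \<le> 2^n" by simp
      thus ?thesis by (simp add: algebra_simps)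
    qed
    thus ?thesis by (simp only: of_nat_power) (intro power_mono; simp)
  qed
  have b: "(real d / 2^n)^Q = real d ^ Q / ((2^n)^(2*d) * 4^n)"
  proof -
    have "((2::real)^n) ^ Q = (2^n)^(2*d) * (2^n)^2" by (simp add: Q power_add power2_eq_square)
    also have "((2::real)^n)^2 = 4^n" by (simp add: power_mult[symmetric] mult.commute[of n] power_mult)
    finally show ?thesis by (simp add: power_divide)
  qed
  have "real ((2*K*2^n+1)^(2*d)) * (C0 * (real d / 2^n)^Q) \<le> (real (2*K+1) * 2^n)^(2*d) * (C0 * (real d / 2^n)^Q)"
    using a C0 by (intro mult_right_mono) auto
  also have "\<dots> = (real (2*K+1))^(2*d) * C0 * real d ^ Q * (1/4)^n"
  proof -
    have x: "((2::real)^n)^(2*d) > 0" by simp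
    have y: "(4::real)^n > 0" by simp
    have gen: "\<And>x y c D. x > 0 \<Longrightarrow> y > 0 \<Longrightarrow> c * x * (C0 * (D / (x * y))) = c * C0 * D * (1 / y)" for c :: real
      by (simp add: field_simps)
    show ?thesis unfolding b power_mult_distrib power_one_over
      by (rule gen[OF x y])
  qed
  finally show ?thesis .
qed

lemma kolmogorov:
  fixes M :: "'a measure" and X :: "real^'d \<Rightarrow> 'a \<Rightarrow> real" and Q :: nat and C0 A :: real
  assumes P: "prob_space M"
    and Xm: "\<And>s. X s \<in> borel_measurable M"
    and Q: "Q = 2 * CARD('d) + 2" and C0: "C0 \<ge> 0" and A: "A \<ge> 0"
    and inc: "\<And>s t. integrable M (\<lambda>\<omega>. (X s \<omega> - X t \<omega>)^(4*Q)) \<and>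
                (\<integral>\<omega>. (X s \<omega> - X t \<omega>)^(4*Q) \<partial>M) \<le> C0 * norm (s - t)^Q"
    and inc2: "\<And>s t. integrable M (\<lambda>\<omega>. (X s \<omega> - X t \<omega>)^2) \<and>
                (\<integral>\<omega>. (X s \<omega> - X t \<omega>)^2 \<partial>M) \<le> A * sqrt (norm (s - t))"
  shows "\<exists>Y :: real^'d \<Rightarrow> 'a \<Rightarrow> real.
           (\<forall>s. Y s \<in> borel_measurable M \<and> (AE \<omega> in M. Y s \<omega> = X s \<omega>)) \<and>
           (AE \<omega> in M. continuous_on UNIV (\<lambda>s. Y s \<omega>))"
proof -
  interpret prob_space M by (rule P)
  note Xm[measurable]
  define d where "d = CARD('d)"
  have Qd: "Q = 2 * d + 2" using Q by (simp add: d_def)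
  have Q0: "Q > 0" using Qd by simp
  have ev: "even (4*Q)" by simp
  define Lam where "Lam K n \<omega> = (\<Sum>pq\<in>pairs K n. (X (fst pq) \<omega> - X (snd pq) \<omega>)^(4*Q))" for K n \<omega>
  have Lam_nn: "0 \<le> Lam K n \<omega>" for K n \<omega>
    unfolding Lam_def by (intro sum_nonneg) (simp add: zero_le_even_power[OF ev])
  have Lam_m[measurable]: "Lam K n \<in> borel_measurable M" for K n
    unfolding Lam_def[abs_def] by measurable
  have Lam_int: "integrable M (Lam K n)" for K n
    unfolding Lam_def[abs_def] by (rule Bochner_Integration.integrable_sum) (use inc in blast)
  define cK where "cK K = (real (2*K+1))^(2*d) * C0 * real d ^ Q" for K
  have cK0: "cK K \<ge> 0" for K using C0 by (simp add: cK_def)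
  have Lam_I: "(\<integral>\<omega>. Lam K n \<omega> \<partial>M) \<le> cK K * (1/4)^n" for K n
  proof -
    have "(\<integral>\<omega>. Lam K n \<omega> \<partial>M) = (\<Sum>pq\<in>pairs K n. (\<integral>\<omega>. (X (fst pq) \<omega> - X (snd pq) \<omega>)^(4*Q) \<partial>M))"
      unfolding Lam_def by (rule Bochner_Integration.integral_sum) (use inc in blast)
    also have "\<dots> \<le> (\<Sum>pq\<in>(pairs K n :: ((real^'d) \<times> (real^'d)) set). C0 * (real d / 2^n)^Q)"
    proof (intro sum_mono)
      fix pq :: "(real^'d) \<times> (real^'d)" assume pq: "pq \<in> pairs K n"
      have "norm (fst pq - snd pq) \<le> real d / 2^n"
        using pairs_norm[of "fst pq" "snd pq" K n] pq by (simp add: d_def)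
      hence "norm (fst pq - snd pq)^Q \<le> (real d / 2^n)^Q" by (intro power_mono) auto
      thus "(\<integral>\<omega>. (X (fst pq) \<omega> - X (snd pq) \<omega>)^(4*Q) \<partial>M) \<le> C0 * (real d / 2^n)^Q"
        using inc[of "fst pq" "snd pq"] C0 by (meson mult_left_mono order_trans)
    qed
    also have "\<dots> = real (card (pairs K n :: ((real^'d) \<times> (real^'d)) set)) * (C0 * (real d / 2^n)^Q)" by simp
    also have "\<dots> \<le> real ((2*K*2^n+1)^(2*d)) * (C0 * (real d / 2^n)^Q)"
    proof (rule mult_right_mono)
      have "card (pairs K n :: ((real^'d) \<times> (real^'d)) set) \<le> (2*K*2^n+1)^(2*d)"
        using pairs_card[of K n, where 'd='d] by (simp add: d_def)
      thus "real (card (pairs K n :: ((real^'d) \<times> (real^'d)) set)) \<le> real ((2*K*2^n+1)^(2*d))"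
        by (simp only: of_nat_le_iff)
    qed (use C0 in simp)
    also have "\<dots> \<le> cK K * (1/4)^n" unfolding cK_def by (rule Lam_bound_alg[OF Qd C0])
    finally show ?thesis .
  qed
  define W where "W K \<omega> = (\<Sum>n. ennreal (2^n * Lam K n \<omega>))" for K \<omega>
  have W_m[measurable]: "W K \<in> borel_measurable M" for K unfolding W_def[abs_def] by measurable
  have W_fin: "AE \<omega> in M. W K \<omega> \<noteq> \<infinity>" for K
  proof (rule nn_integral_PInf_AE[OF W_m])
    have "(\<integral>\<^sup>+\<omega>. W K \<omega> \<partial>M) = (\<Sum>n. \<integral>\<^sup>+\<omega>. ennreal (2^n * Lam K n \<omega>) \<partial>M)"
      unfolding W_def by (rule nn_integral_suminf) measurable
    also have "\<dots> \<le> (\<Sum>n. ennreal (cK K * (1/2)^n))"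
    proof (intro suminf_le allI summableI)
      fix n
      have "(\<integral>\<^sup>+\<omega>. ennreal (2^n * Lam K n \<omega>) \<partial>M) = ennreal (\<integral>\<omega>. 2^n * Lam K n \<omega> \<partial>M)"
        using Lam_int Lam_nn by (intro nn_integral_eq_integral) auto
      also have "(\<integral>\<omega>. 2^n * Lam K n \<omega> \<partial>M) = 2^n * (\<integral>\<omega>. Lam K n \<omega> \<partial>M)" by simp
      also have "\<dots> \<le> 2^n * (cK K * (1/4)^n)" using Lam_I by (intro mult_left_mono) auto
      also have "\<dots> = cK K * (1/2)^n" by (simp add: power_divide field_simps power_mult_distrib[symmetric])
      finally show "(\<integral>\<^sup>+\<omega>. ennreal (2^n * Lam K n \<omega>) \<partial>M) \<le> ennreal (cK K * (1/2)^n)"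
        by (simp add: ennreal_leI)
    qed
    also have "\<dots> = ennreal (cK K * 2)"
    proof (rule suminf_ennreal_eq)
      show "\<And>i. 0 \<le> cK K * (1/2)^i" using cK0 by simp
      have "(\<lambda>n. (1/2::real)^n) sums (1 / (1 - 1/2))" by (rule geometric_sums) simp
      thus "(\<lambda>n. cK K * (1/2)^n) sums (cK K * 2)" using sums_mult[of _ _ "cK K"] by simp
    qed
    finally show "(\<integral>\<^sup>+\<omega>. W K \<omega> \<partial>M) \<noteq> \<infinity>" by (auto simp: top_unique)
  qed
  have good_ae: "AE \<omega> in M. \<forall>K. W K \<omega> \<noteq> \<infinity>"
    using W_fin by (simp add: AE_all_countable)
  define e where "e = 1 / real (4*Q)"
  define r where "r = (1/2::real) powr e"
  have e0: "e > 0" using Q0 by (simp add: e_def)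
  have r0: "0 \<le> r" and r1: "r < 1"
  proof -
    show "0 \<le> r" by (simp add: r_def)
    have "(1/2::real) powr e < 1 powr e" by (rule powr_less_mono2) (use e0 in auto)
    thus "r < 1" by (simp add: r_def)
  qed
  define BB where "BB K \<omega> = (\<Sum>n. 2^n * Lam K n \<omega>) powr e" for K \<omega>
  have BB0: "BB K \<omega> \<ge> 0" for K \<omega> by (simp add: BB_def)
  have H: "\<bar>X p \<omega> - X q \<omega>\<bar> \<le> BB K \<omega> * r^n"
    if g: "W K \<omega> \<noteq> \<infinity>" and pq: "(p, q) \<in> pairs K n" for K \<omega> n p q
  proof -
    have summ: "summable (\<lambda>n. 2^n * Lam K n \<omega>)"
      using g Lam_nn by (intro summable_suminf_not_top) (auto simp: W_def)
    have "2^n * Lam K n \<omega> \<le> (\<Sum>n. 2^n * Lam K n \<omega>)"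
      using sum_le_suminf[OF summ, of "{n}"] Lam_nn by simp
    hence l: "Lam K n \<omega> \<le> (\<Sum>n. 2^n * Lam K n \<omega>) * (1/2)^n" by (simp add: field_simps power_divide)
    have "(X p \<omega> - X q \<omega>)^(4*Q) \<le> Lam K n \<omega>"
      unfolding Lam_def
      using member_le_sum[of "(p,q)" "pairs K n" "\<lambda>pq. (X (fst pq) \<omega> - X (snd pq) \<omega>)^(4*Q)"]
        pq pairs_finite[of K n, where 'd='d]
      by (simp add: zero_le_even_power[OF ev])
    hence "(X p \<omega> - X q \<omega>)^(4*Q) \<le> (\<Sum>n. 2^n * Lam K n \<omega>) * (1/2)^n" using l by linarith
    from root_bound[OF this Q0] show ?thesis by (simp add: BB_def r_def e_def)
  qed
  define Y where "Y s \<omega> = lim (\<lambda>n. X (trunc n s) \<omega>)" for s \<omega>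
  have Ym: "Y s \<in> borel_measurable M" for s
    unfolding Y_def[abs_def] by (rule borel_measurable_lim_metric) simp
  have cube: "\<forall>i. \<bar>s$i\<bar> \<le> real K" if "norm s \<le> real K" for s :: "real^'d" and K
    using that component_le_norm_cart[of s] by (meson order_trans)
  have conv: "(\<lambda>n. X (trunc n s) \<omega>) \<longlonglongrightarrow> Y s \<omega>" if g: "\<forall>K. W K \<omega> \<noteq> \<infinity>" for s \<omega>
  proof -
    define K where "K = nat \<lceil>norm s\<rceil>"
    have sK: "\<forall>i. \<bar>s$i\<bar> \<le> real K" by (rule cube) (simp add: K_def; linarith)
    have "Cauchy (\<lambda>n. X (trunc n s) \<omega>)"
    proof (rule metric_CauchyI)
      fix \<epsilon> :: real assume \<epsilon>: "\<epsilon> > 0"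
      obtain m where m: "3 * BB K \<omega> * r^m / (1 - r) < \<epsilon>" using small_geom[OF r0 r1 BB0 \<epsilon>] by blast
      show "\<exists>M. \<forall>n\<ge>M. \<forall>n'\<ge>M. dist (X (trunc n s) \<omega>) (X (trunc n' s) \<omega>) < \<epsilon>"
      proof (intro exI[of _ m] allI impI)
        fix n n' assume "m \<le> n" "m \<le> n'"
        have ss: "\<forall>i. \<bar>s$i - s$i\<bar> \<le> 1/(2::real)^m" by simp
        have "\<bar>X (trunc n s) \<omega> - X (trunc n' s) \<omega>\<bar> \<le> 3 * BB K \<omega> * r^m / (1 - r)"
          by (rule chain[where g="\<lambda>p. X p \<omega>", OF H[OF g[rule_format]] sK sK ss BB0 r0 r1 \<open>m \<le> n\<close> \<open>m \<le> n'\<close>])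
        thus "dist (X (trunc n s) \<omega>) (X (trunc n' s) \<omega>) < \<epsilon>" using m by (simp add: dist_real_def)
      qed
    qed
    hence "convergent (\<lambda>n. X (trunc n s) \<omega>)" by (rule Cauchy_convergent)
    thus ?thesis unfolding Y_def by (simp add: convergent_LIMSEQ_iff)
  qed
  have cont: "continuous_on UNIV (\<lambda>s. Y s \<omega>)" if g: "\<forall>K. W K \<omega> \<noteq> \<infinity>" for \<omega>
    unfolding continuous_on_iff
  proof (intro ballI allI impI)
    fix s :: "real^'d" and \<epsilon> :: real assume \<epsilon>: "\<epsilon> > 0"
    define K where "K = nat \<lceil>norm s\<rceil> + 1"
    obtain m where m: "3 * BB K \<omega> * r^m / (1 - r) < \<epsilon>" using small_geom[OF r0 r1 BB0 \<epsilon>] by blast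
    show "\<exists>\<delta>>0. \<forall>t\<in>UNIV. dist t s < \<delta> \<longrightarrow> dist (Y t \<omega>) (Y s \<omega>) < \<epsilon>"
    proof (intro exI[of _ "min 1 (1/2^m)"] conjI ballI impI)
      show "0 < min 1 (1/2^m :: real)" by simp
      fix t :: "real^'d" assume dt: "dist t s < min 1 (1/2^m)"
      have sK: "\<forall>i. \<bar>s$i\<bar> \<le> real K" by (rule cube) (simp add: K_def; linarith)
      have d1: "dist t s < 1" using dt min.cobounded1[of 1 "1/2^m::real"] by linarith
      have "norm t \<le> norm s + 1" using d1 norm_triangle_ineq2[of t s] by (simp add: dist_norm)
      hence tK: "\<forall>i. \<bar>t$i\<bar> \<le> real K" by (intro cube) (simp add: K_def; linarith)
      have st: "\<forall>i. \<bar>t$i - s$i\<bar> \<le> 1/2^m"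
      proof
        fix i
        have "norm (t - s) < 1/2^m" using dt min.cobounded2[of 1 "1/2^m::real"] by (simp add: dist_norm)
        moreover have "\<bar>(t - s)$i\<bar> \<le> norm (t - s)" by (rule component_le_norm_cart)
        ultimately show "\<bar>t$i - s$i\<bar> \<le> 1/2^m" by simp
      qed
      have le: "\<bar>X (trunc n t) \<omega> - X (trunc n s) \<omega>\<bar> \<le> 3 * BB K \<omega> * r^m / (1 - r)" if "m \<le> n" for n
        by (rule chain[where g="\<lambda>p. X p \<omega>", OF H[OF g[rule_format]] tK sK st BB0 r0 r1 that that])
      have "(\<lambda>n. \<bar>X (trunc n t) \<omega> - X (trunc n s) \<omega>\<bar>) \<longlonglongrightarrow> \<bar>Y t \<omega> - Y s \<omega>\<bar>"
        by (intro tendsto_intros conv g)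
      hence "\<bar>Y t \<omega> - Y s \<omega>\<bar> \<le> 3 * BB K \<omega> * r^m / (1 - r)"
        by (rule tendsto_upperbound) (auto simp: eventually_sequentially intro!: exI[of _ m] le)
      thus "dist (Y t \<omega>) (Y s \<omega>) < \<epsilon>" using m by (simp add: dist_real_def)
    qed
  qed
  have modif: "AE \<omega> in M. Y s \<omega> = X s \<omega>" for s
  proof -
    define V where "V \<omega> = (\<Sum>n. ennreal ((X (trunc n s) \<omega> - X s \<omega>)^2))" for \<omega>
    have Vm[measurable]: "V \<in> borel_measurable M" unfolding V_def[abs_def] by measurable
    have "(\<integral>\<^sup>+\<omega>. V \<omega> \<partial>M) = (\<Sum>n. \<integral>\<^sup>+\<omega>. ennreal ((X (trunc n s) \<omega> - X s \<omega>)^2) \<partial>M)"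
      unfolding V_def by (rule nn_integral_suminf) measurable
    also have "\<dots> \<le> (\<Sum>n. ennreal (A * sqrt (real d) * (sqrt (1/2))^n))"
    proof (intro suminf_le allI summableI)
      fix n
      have "(\<integral>\<^sup>+\<omega>. ennreal ((X (trunc n s) \<omega> - X s \<omega>)^2) \<partial>M) = ennreal (\<integral>\<omega>. (X (trunc n s) \<omega> - X s \<omega>)^2 \<partial>M)"
        using inc2 by (intro nn_integral_eq_integral) auto
      also have "(\<integral>\<omega>. (X (trunc n s) \<omega> - X s \<omega>)^2 \<partial>M) \<le> A * sqrt (norm (trunc n s - s))"
        using inc2 by blast
      also have "\<dots> \<le> A * sqrt (real d / 2^n)"
        using trunc_norm[of n s] A by (intro mult_left_mono real_sqrt_le_mono) (auto simp: d_def)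
      also have "\<dots> = A * sqrt (real d) * (sqrt (1/2))^n"
        by (simp add: real_sqrt_divide real_sqrt_power power_one_over)
      finally show "(\<integral>\<^sup>+\<omega>. ennreal ((X (trunc n s) \<omega> - X s \<omega>)^2) \<partial>M) \<le> ennreal (A * sqrt (real d) * (sqrt (1/2))^n)"
        by (simp add: ennreal_leI)
    qed
    also have "\<dots> = ennreal (A * sqrt (real d) * (1 / (1 - sqrt (1/2))))"
    proof (rule suminf_ennreal_eq)
      show "\<And>i. 0 \<le> A * sqrt (real d) * (sqrt (1/2))^i" using A by simp
      have "(\<lambda>n. (sqrt (1/2)::real)^n) sums (1 / (1 - sqrt (1/2)))" by (rule geometric_sums) simp
      thus "(\<lambda>n. A * sqrt (real d) * (sqrt (1/2))^n) sums (A * sqrt (real d) * (1 / (1 - sqrt (1/2))))"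
        by (rule sums_mult)
    qed
    finally have "(\<integral>\<^sup>+\<omega>. V \<omega> \<partial>M) \<noteq> \<infinity>" by (auto simp: top_unique)
    hence Vfin: "AE \<omega> in M. V \<omega> \<noteq> \<infinity>" by (rule nn_integral_PInf_AE[OF Vm])
    show ?thesis using Vfin good_ae
    proof eventually_elim
      case (elim \<omega>)
      have "summable (\<lambda>n. (X (trunc n s) \<omega> - X s \<omega>)^2)"
        using elim(1) by (intro summable_suminf_not_top) (auto simp: V_def)
      hence "(\<lambda>n. (X (trunc n s) \<omega> - X s \<omega>)^2) \<longlonglongrightarrow> 0" by (rule summable_LIMSEQ_zero)
      hence "(\<lambda>n. sqrt ((X (trunc n s) \<omega> - X s \<omega>)^2)) \<longlonglongrightarrow> sqrt 0" by (rule tendsto_real_sqrt)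
      hence "(\<lambda>n. \<bar>X (trunc n s) \<omega> - X s \<omega>\<bar>) \<longlonglongrightarrow> 0" by simp
      hence "(\<lambda>n. X (trunc n s) \<omega> - X s \<omega>) \<longlonglongrightarrow> 0" by (simp add: tendsto_rabs_zero_iff)
      hence "(\<lambda>n. X (trunc n s) \<omega>) \<longlonglongrightarrow> X s \<omega>" by (simp add: LIM_zero_iff)
      thus "Y s \<omega> = X s \<omega>" using conv[OF elim(2)] by (rule LIMSEQ_unique[rotated])
    qed
  qed
  show ?thesis
  proof (intro exI[of _ Y] conjI allI)
    fix s show "Y s \<in> borel_measurable M" by (rule Ym)
    show "AE \<omega> in M. Y s \<omega> = X s \<omega>" by (rule modif)
  next
    show "AE \<omega> in M. continuous_on UNIV (\<lambda>s. Y s \<omega>)"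
      using good_ae by eventually_elim (rule cont)
  qed
qed

theorem proposition2:
  fixes M :: "'a measure" and X :: "real^'d \<Rightarrow> 'a \<Rightarrow> real"
    and n1 n2 :: nat and \<alpha> :: "nat \<Rightarrow> nat" and \<kappa> :: "nat \<Rightarrow> real"
    and b :: "nat \<Rightarrow> real" and B :: "nat \<Rightarrow> real^'d"
  assumes "prob_space M"
    and "\<forall>i<n1. (\<kappa> i)\<^sup>2 > 0"
    and "stationary_gaussian_with_spectral_density M X (spec_dens n1 \<alpha> \<kappa> n2 b B)"
    and "2 * int (\<Sum>i<n1. \<alpha> i) - 2 * int n2 > int CARD('d)"
  shows "\<exists>Y :: real^'d \<Rightarrow> 'a \<Rightarrow> real.
           (\<forall>s. Y s \<in> borel_measurable M \<and> (AE \<omega> in M. Y s \<omega> = X s \<omega>)) \<and>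
           (AE \<omega> in M. continuous_on UNIV (\<lambda>s. Y s \<omega>))"
proof -
  note P = assms(1)
  obtain A where A: "A \<ge> 0" and props: "\<And>s t. X s \<in> borel_measurable M \<and> gaussian_rv M (\<lambda>\<omega>. X s \<omega> - X t \<omega>) \<and>
     (\<integral>\<omega>. X s \<omega> - X t \<omega> \<partial>M) = 0 \<and> integrable M (\<lambda>\<omega>. (X s \<omega> - X t \<omega>)^2) \<and>
     (\<integral>\<omega>. (X s \<omega> - X t \<omega>)^2 \<partial>M) \<le> A * sqrt (norm (s - t))"
    using increments[OF assms] by blast
  define Q where "Q = 2 * CARD('d) + 2"
  define C0 where "C0 = fact (2*(2*Q)) / (2^(2*Q) * fact (2*Q)) * A^(2*Q)"
  have C0: "C0 \<ge> 0" using A by (simp add: C0_def)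
  show ?thesis
  proof (rule kolmogorov[OF P _ Q_def C0 A])
    fix s show "X s \<in> borel_measurable M" using props by blast
  next
    fix s t :: "real^'d"
    show "integrable M (\<lambda>\<omega>. (X s \<omega> - X t \<omega>)^2) \<and> (\<integral>\<omega>. (X s \<omega> - X t \<omega>)^2 \<partial>M) \<le> A * sqrt (norm (s - t))"
      using props by blast
  next
    fix s t :: "real^'d"
    have gm: "integrable M (\<lambda>\<omega>. (X s \<omega> - X t \<omega>) ^ (2*(2*Q))) \<and>
      (\<integral>\<omega>. (X s \<omega> - X t \<omega>) ^ (2*(2*Q)) \<partial>M) = fact (2*(2*Q)) / (2^(2*Q) * fact (2*Q)) * (\<integral>\<omega>. (X s \<omega> - X t \<omega>) ^ 2 \<partial>M) ^ (2*Q)"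
      using props[of s t] by (intro gaussian_even_moment[OF P]) auto
    have e4: "2*(2*Q) = 4*Q" by simp
    have v0: "0 \<le> (\<integral>\<omega>. (X s \<omega> - X t \<omega>) ^ 2 \<partial>M)" by (intro integral_nonneg_AE) auto
    have "(\<integral>\<omega>. (X s \<omega> - X t \<omega>) ^ 2 \<partial>M) ^ (2*Q) \<le> (A * sqrt (norm (s - t))) ^ (2*Q)"
      using props[of s t] v0 by (intro power_mono) auto
    also have "\<dots> = A^(2*Q) * norm (s - t) ^ Q"
      by (simp add: power_mult_distrib power_mult)
    finally have le: "(\<integral>\<omega>. (X s \<omega> - X t \<omega>) ^ 2 \<partial>M) ^ (2*Q) \<le> A^(2*Q) * norm (s - t) ^ Q" .
    have fpos: "0 \<le> fact (2*(2*Q)) / (2^(2*Q) * fact (2*Q) :: real)" by simp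
    show "integrable M (\<lambda>\<omega>. (X s \<omega> - X t \<omega>)^(4*Q)) \<and> (\<integral>\<omega>. (X s \<omega> - X t \<omega>)^(4*Q) \<partial>M) \<le> C0 * norm (s - t)^Q"
      using gm mult_left_mono[OF le fpos] unfolding e4 by (simp add: C0_def mult.assoc)
  qed
qed

end
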